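(* Let $\mathfrak g=\mathfrak{sl}_3$, $\lambda_1,\lambda_2\in P^+$, and $w\in\{\mathrm{id},s_2\}$ such that $w(\lambda_1-\lambda_2)\in P^+$ and $w(\lambda_1-\lambda_2)(h_1)>0$. Let $a\in\{1,\ w(\lambda_1-\lambda_2)(h_1)\}$. Then for each $\nu\in P^+$ there exists an integer $0\le\ell\le a$ such that every $(s_{1,1},s_{1,2},s_{1,3},s_{2,2},s_{2,3})\in\mathbf T(\lambda_2)^\nu_{\lambda_1}$ satisfies $$a-\ell\le s_{1,2}\le\lambda_1(h_1)-\ell,\qquad s_{1,3}\le\lambda_1(h_2)-(a-\ell),\qquad s_{2,3}\ge a-\ell.$$
   Context: $\mathfrak g=\mathfrak{sl}_3$ with simple coroots $h_1,h_2$, fundamental weights $\omega_1,\omega_2$, simple reflections $s_1,s_2$, dominant integral weights $P^+$. For $\lambda\in P^+$, $\mathbf T(\lambda)$ is the set of $(s_{1,1},s_{1,2},s_{1,3},s_{2,2},s_{2,3})\in\mathbb Z_{\ge0}^5$ with $s_{1,1}+s_{1,2}+s_{1,3}=\lambda(h_1)+\lambda(h_2)$, $s_{2,2}+s_{2,3}=\lambda(h_2)$, $s_{1,1}\ge s_{2,2}$, $s_{1,1}+s_{1,2}\ge s_{2,2}+s_{2,3}$. For $\lambda,\mu,\nu\in P^+$, $\mathbf T(\lambda)^\nu_\mu$ is the set of elements of $\mathbf T(\lambda)$ satisfying $s_{1,2}\le\mu(h_1)$, $s_{1,3}\le\mu(h_2)$, $s_{2,3}+s_{1,3}\le\mu(h_2)+s_{1,2}$,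 $\nu(h_1)+\nu(h_2)=\mu(h_1)+\mu(h_2)+s_{1,1}-s_{1,3}-s_{2,3}$, and $\nu(h_2)=\mu(h_2)+s_{1,2}+s_{2,2}-s_{1,3}-s_{2,3}$. *)

theory Defs
  imports Main
begin

text \<open>Integral weights of sl_3 are encoded by their values on the simple coroots:
  a weight mu is the pair (mu(h_1), mu(h_2)) of integers, i.e. its coordinates in the
  basis of fundamental weights omega_1, omega_2.\<close>

type_synonym weight = "int \<times> int"

definition dominant :: "weight \<Rightarrow> bool" where
  "dominant mu \<longleftrightarrow> fst mu \<ge> 0 \<and> snd mu \<ge> 0"

definition wsub :: "weight \<Rightarrow> weight \<Rightarrow> weight" where
  "wsub mu nu = (fst mu - fst nu, snd mu - snd nu)"

text \<open>Simple reflections: s_i(mu) = mu - mu(h_i) alpha_i, with alpha_1 = (2,-1),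
  alpha_2 = (-1,2) in fundamental weight coordinates.\<close>

definition refl1 :: "weight \<Rightarrow> weight" where
  "refl1 mu = (- fst mu, snd mu + fst mu)"

definition refl2 :: "weight \<Rightarrow> weight" where
  "refl2 mu = (fst mu + snd mu, - snd mu)"

definition T :: "weight \<Rightarrow> (int \<times> int \<times> int \<times> int \<times> int) set" where
  "T lam = {(s11, s12, s13, s22, s23).
      s11 \<ge> 0 \<and> s12 \<ge> 0 \<and> s13 \<ge> 0 \<and> s22 \<ge> 0 \<and> s23 \<ge> 0 \<and>
      s11 + s12 + s13 = fst lam + snd lam \<and>
      s22 + s23 = snd lam \<and>
      s11 \<ge> s22 \<and> s11 + s12 \<ge> s22 + s23}"

definition Tsub :: "weight \<Rightarrow> weight \<Rightarrow> weight \<Rightarrow> (int \<times> int \<times> int \<times> int \<times> int) set" where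
  "Tsub lam mu nu = {(s11, s12, s13, s22, s23) \<in> T lam.
      s12 \<le> fst mu \<and> s13 \<le> snd mu \<and> s23 + s13 \<le> snd mu + s12 \<and>
      fst nu + snd nu = fst mu + snd mu + s11 - s13 - s23 \<and>
      snd nu = snd mu + s12 + s22 - s13 - s23}"

end

theory Submission imports Defs begin
lemma pairlin:
  fixes m1 m2 n1 n2 v1 v2 a :: int
  assumes "m1\<ge>0" "m2\<ge>0" "n1\<ge>0" "n2\<ge>0"
   and c: "(m1-n1 \<ge> 0 \<and> m2-n2\<ge>0 \<and> m1-n1>0 \<and> (a=1 \<or> a = m1-n1)) \<or> (m1-n1+(m2-n2) > 0 \<and> n2-m2 \<ge> 0 \<and> (a=1 \<or> a = m1-n1+(m2-n2)))"
   and x: "x11\<ge>0" "x12\<ge>0" "x13\<ge>0" "x22\<ge>0" "x23\<ge>0" "x11+x12+x13 = n1+n2" "x22+x23=n2" "x11\<ge>x22" "x11+x12\<ge>x22+x23"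
    "x12\<le>m1" "x13\<le>m2" "x23+x13\<le>m2+x12" "v1+v2 = m1+m2+x11-x13-x23" "v2 = m2+x12+x22-x13-x23"
   and y: "y11\<ge>0" "y12\<ge>0" "y13\<ge>0" "y22\<ge>0" "y23\<ge>0" "y11+y12+y13 = n1+n2" "y22+y23=n2" "y11\<ge>y22" "y11+y12\<ge>y22+y23"
    "y12\<le>m1" "y13\<le>m2" "y23+y13\<le>m2+y12" "v1+v2 = m1+m2+y11-y13-y23" "v2 = m2+y12+y22-y13-y23"
  shows "a - x12 \<le> m1 - y12 \<and> a + x13 - m2 \<le> m1 - y12 \<and> a - x23 \<le> m1 - y12"
proof -
  consider "a=1" "m1-n1 \<ge> 0" "m2-n2\<ge>0" "m1-n1>0" | "a = m1-n1" "m1-n1 \<ge> 0" "m2-n2\<ge>0" "m1-n1>0"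
    | "a=1" "m1-n1+(m2-n2) > 0" "n2-m2 \<ge> 0" | "a = m1-n1+(m2-n2)" "m1-n1+(m2-n2) > 0" "n2-m2 \<ge> 0"
    using c by blast
  then show ?thesis
  proof cases
    case 1 then show ?thesis using assms by (intro conjI; linarith)
  next
    case 2 then show ?thesis using assms by (intro conjI; linarith)
  next
    case 3 then show ?thesis using assms by (intro conjI; linarith)
  next
    case 4 then show ?thesis using assms by (intro conjI; linarith)
  qed
qed

lemma memT:
  assumes "(s11, s12, s13, s22, s23) \<in> Tsub (n1,n2) (m1,m2) (v1,v2)"
  shows "s11\<ge>0" "s12\<ge>0" "s13\<ge>0" "s22\<ge>0" "s23\<ge>0" "s11+s12+s13 = n1+n2" "s22+s23=n2" "s11\<ge>s22" "s11+s12\<ge>s22+s23"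
    "s12\<le>m1" "s13\<le>m2" "s23+s13\<le>m2+s12" "v1+v2 = m1+m2+s11-s13-s23" "v2 = m2+s12+s22-s13-s23"
  using assms unfolding Tsub_def T_def by auto

theorem proposition6p3:
  fixes lam1 lam2 nu :: weight and w :: "weight \<Rightarrow> weight" and a :: int
  assumes "dominant lam1" and "dominant lam2"
    and "w = id \<or> w = refl2"
    and "dominant (w (wsub lam1 lam2))"
    and "fst (w (wsub lam1 lam2)) > 0"
    and "a = 1 \<or> a = fst (w (wsub lam1 lam2))"
    and "dominant nu"
  shows "\<exists>l::int. 0 \<le> l \<and> l \<le> a \<and>
    (\<forall>s11 s12 s13 s22 s23. (s11, s12, s13, s22, s23) \<in> Tsub lam2 lam1 nu \<longrightarrow>
       a - l \<le> s12 \<and> s12 \<le> fst lam1 - l \<and>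
       s13 \<le> snd lam1 - (a - l) \<and> s23 \<ge> a - l)"
proof -
  obtain m1 m2 where L1: "lam1 = (m1,m2)" by (cases lam1)
  obtain n1 n2 where L2: "lam2 = (n1,n2)" by (cases lam2)
  obtain v1 v2 where N: "nu = (v1,v2)" by (cases nu)
  have dom: "m1\<ge>0" "m2\<ge>0" "n1\<ge>0" "n2\<ge>0" using assms(1,2) L1 L2 by (auto simp: dominant_def)
  have c: "(m1-n1 \<ge> 0 \<and> m2-n2\<ge>0 \<and> m1-n1>0 \<and> (a=1 \<or> a = m1-n1)) \<or> (m1-n1+(m2-n2) > 0 \<and> n2-m2 \<ge> 0 \<and> (a=1 \<or> a = m1-n1+(m2-n2)))"
    using assms(3-6) L1 L2 by (auto simp: dominant_def wsub_def refl2_def)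
  have a0: "a \<ge> 0" using c by auto
  define S where "S = Tsub (n1,n2) (m1,m2) (v1,v2)"
  define fl :: "int \<Rightarrow> int \<Rightarrow> int \<Rightarrow> int" where "fl x12 x13 x23 = max (a-x12) (max (a+x13-m2) (a-x23))" for x12 x13 x23
  define F where "F = {v. \<exists>s11 s12 s13 s22 s23. (s11,s12,s13,s22,s23)\<in>S \<and> v = fl s12 s13 s23 \<and> 0 \<le> v}"
  have fa: "fl s12 s13 s23 \<le> a" if "(s11,s12,s13,s22,s23)\<in>S" for s11 s12 s13 s22 s23
    using memT[OF that[unfolded S_def]] unfolding fl_def by simp
  have pw: "fl x12 x13 x23 \<le> m1 - y12" if "(x11,x12,x13,x22,x23)\<in>S" "(y11,y12,y13,y22,y23)\<in>S"
    for x11 x12 x13 x22 x23 y11 y12 y13 y22 y23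
    using pairlin[OF dom c memT[OF that(1)[unfolded S_def]] memT[OF that(2)[unfolded S_def]]]
    unfolding fl_def by simp
  have Fsub: "F \<subseteq> {0..a}" unfolding F_def using fa by fastforce
  hence finF: "finite F" using finite_subset by blast
  define l where "l = (if F = {} then 0 else Max F)"
  have l0: "0 \<le> l \<and> l \<le> a"
  proof (cases "F = {}")
    case False
    hence "Max F \<in> F" using Max_in[OF finF] by simp
    thus ?thesis using Fsub False unfolding l_def by auto
  next
    case True thus ?thesis by (simp add: l_def a0)
  qed
  have ge: "fl s12 s13 s23 \<le> l" if "(s11,s12,s13,s22,s23)\<in>S" for s11 s12 s13 s22 s23
  proof (cases "0 \<le> fl s12 s13 s23")
    case True
    hence "fl s12 s13 s23 \<in> F" unfolding F_def using that by blast
    thus ?thesis unfolding l_def using finF by auto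
  next
    case False thus ?thesis using l0 by linarith
  qed
  have le: "l \<le> m1 - s12" if "(s11,s12,s13,s22,s23)\<in>S" for s11 s12 s13 s22 s23
  proof (cases "F = {}")
    case True thus ?thesis unfolding l_def using memT[OF that[unfolded S_def]] by simp
  next
    case False
    hence "l \<in> F" unfolding l_def using Max_in[OF finF] by simp
    then obtain x11 x12 x13 x22 x23 where "(x11,x12,x13,x22,x23)\<in>S" "l = fl x12 x13 x23"
      unfolding F_def by blast
    thus ?thesis using pw that by metis
  qed
  show ?thesis
  proof (intro exI[of _ l] conjI allI impI)
    show "0 \<le> l" "l \<le> a" using l0 by auto
  next
    fix s11 s12 s13 s22 s23 assume "(s11, s12, s13, s22, s23) \<in> Tsub lam2 lam1 nu"
    hence m: "(s11, s12, s13, s22, s23) \<in> S" unfolding S_def L1 L2 N .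
    have "fl s12 s13 s23 \<le> l" "l \<le> m1 - s12" using ge[OF m] le[OF m] .
    thus "a - l \<le> s12" "s12 \<le> fst lam1 - l" "s13 \<le> snd lam1 - (a - l)" "s23 \<ge> a - l"
      unfolding fl_def L1 by auto
  qed
qed

end
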